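(* There is an absolute constant $c>0$ such that for every $k\ge 1$, every parity decision tree that computes $\mathsf{MAJ}_3^{\otimes k}$ has depth at least $c\cdot 2.25^k$; i.e., the parity decision tree depth of $\mathsf{MAJ}_3^{\otimes k}$ is $\Omega(2.25^k)$.
   Context: $\mathsf{MAJ}_3:\{-1,1\}^3\to\{-1,1\}$ is $\mathsf{MAJ}_3(x)=(-1)^{\mathbf{1}[x_1+x_2+x_3<0]}$. For $k\ge2$, $\mathsf{MAJ}_3^{\otimes k}:\{-1,1\}^{3^k}\to\{-1,1\}$ is defined by $\mathsf{MAJ}_3^{\otimes k}(x)=\mathsf{MAJ}_3\big(\mathsf{MAJ}_3^{\otimes k-1}(x_1,\dots,x_{3^{k-1}}),\mathsf{MAJ}_3^{\otimes k-1}(x_{3^{k-1}+1},\dots,x_{2\cdot3^{k-1}}),\mathsf{MAJ}_3^{\otimes k-1}(x_{2\cdot 3^{k-1}+1},\dots,x_{3^k})\big)$, with $\mathsf{MAJ}_3^{\otimes 1}=\mathsf{MAJ}_3$. A parity decision tree is a rooted full binary tree whose internal nodes are labelled by subsets $S$ of the variable indices, whose two outgoing edges are labelled $-1$ and $1$, and whose leaves are labelled by values in $\{-1,1\}$; an input $x$ follows from a node labelled $S$ the edge labelled $\prod_{i\in S}x_i$. It computes $f$ if every input $x$ reaches a leaf labelled $f(x)$; its depth is the maximum number of internal nodes on a root-to-leaf path. *)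

theory Defs
  imports Complex_Main
begin

(* Boolean inputs are encoded as functions x :: nat => int with x i in {-1,1}
   for the relevant indices i < n (0-based; paper index i+1). *)

definition maj3 :: "int \<Rightarrow> int \<Rightarrow> int \<Rightarrow> int" where
  "maj3 a b c = (if a + b + c < 0 then -1 else 1)"

fun majk :: "nat \<Rightarrow> (nat \<Rightarrow> int) \<Rightarrow> nat \<Rightarrow> int" where
  "majk 0 x off = x off"
| "majk (Suc k) x off =
     maj3 (majk k x off) (majk k x (off + 3^k)) (majk k x (off + 2 * 3^k))"

definition MAJ :: "nat \<Rightarrow> (nat \<Rightarrow> int) \<Rightarrow> int" where
  "MAJ k x = majk k x 0"

datatype pdt = Leaf int | Node "nat set" pdt pdt

fun pdt_eval :: "pdt \<Rightarrow> (nat \<Rightarrow> int) \<Rightarrow> int" where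
  "pdt_eval (Leaf b) x = b"
| "pdt_eval (Node S tm tp) x = (if (\<Prod>i\<in>S. x i) = -1 then pdt_eval tm x else pdt_eval tp x)"

fun pdt_depth :: "pdt \<Rightarrow> nat" where
  "pdt_depth (Leaf b) = 0"
| "pdt_depth (Node S tm tp) = Suc (max (pdt_depth tm) (pdt_depth tp))"

fun pdt_wf :: "nat \<Rightarrow> pdt \<Rightarrow> bool" where
  "pdt_wf n (Leaf b) = (b \<in> {-1, 1})"
| "pdt_wf n (Node S tm tp) = (S \<subseteq> {..<n} \<and> pdt_wf n tm \<and> pdt_wf n tp)"

definition pm_inputs :: "nat \<Rightarrow> (nat \<Rightarrow> int) set" where
  "pm_inputs n = {x. \<forall>i<n. x i \<in> {-1, 1}}"

definition pdt_computes :: "nat \<Rightarrow> pdt \<Rightarrow> ((nat \<Rightarrow> int) \<Rightarrow> int) \<Rightarrow> bool" where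
  "pdt_computes n T f \<longleftrightarrow> pdt_wf n T \<and> (\<forall>x\<in>pm_inputs n. pdt_eval T x = f x)"

end

theory Submission imports Defs begin

definition sg :: "bool \<Rightarrow> int" where "sg v = (if v then -1 else 1)"
definition X :: "(nat \<Rightarrow> bool) \<Rightarrow> nat \<Rightarrow> int" where "X b = (\<lambda>i. sg (b i))"
definition chi :: "nat set \<Rightarrow> (nat \<Rightarrow> bool) \<Rightarrow> int" where "chi U b = (\<Prod>i\<in>U. sg (b i))"

fun cs :: "nat \<Rightarrow> nat \<Rightarrow> ((nat \<Rightarrow> bool) \<Rightarrow> int) \<Rightarrow> (nat \<Rightarrow> bool) \<Rightarrow> int" where
  "cs lo 0 F = F"
| "cs lo (Suc m) F = cs lo m (\<lambda>b. F (b(lo+m:=True)) + F (b(lo+m:=False)))"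

lemma cs_mult: "cs lo m (\<lambda>b. a * F b) b0 = a * cs lo m F b0"
proof (induction m arbitrary: F b0)
  case 0 then show ?case by simp
next
  case (Suc m)
  have "(\<lambda>b. a * F (b(lo+m:=True)) + a * F (b(lo+m:=False))) = (\<lambda>b. a * (F (b(lo+m:=True)) + F (b(lo+m:=False))))"
    by (simp add: algebra_simps)
  then show ?case using Suc by simp
qed

lemma cs_add: "cs lo m (\<lambda>b. F b + G b) b0 = cs lo m F b0 + cs lo m G b0"
proof (induction m arbitrary: F G b0)
  case 0 then show ?case by simp
next
  case (Suc m)
  have "(\<lambda>b. F (b(lo+m:=True)) + G (b(lo+m:=True)) + (F (b(lo+m:=False)) + G (b(lo+m:=False))))
     = (\<lambda>b. (F (b(lo+m:=True)) + F (b(lo+m:=False))) + (G (b(lo+m:=True)) + G (b(lo+m:=False))))"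
    by (simp add: algebra_simps)
  then show ?case using Suc by simp
qed

lemma cs_zero: "cs lo m (\<lambda>b. 0) b0 = 0"
  using cs_mult[of lo m 0 "\<lambda>b. 0" b0] by simp

lemma cs_diff: "cs lo m (\<lambda>b. F b - G b) b0 = cs lo m F b0 - cs lo m G b0"
  using cs_add[of lo m F "\<lambda>b. (-1) * G b" b0] cs_mult[of lo m "-1" G b0] by simp

definition indep :: "((nat \<Rightarrow> bool) \<Rightarrow> int) \<Rightarrow> nat \<Rightarrow> nat \<Rightarrow> bool" where
  "indep A lo m \<longleftrightarrow> (\<forall>b v i. lo \<le> i \<and> i < lo + m \<longrightarrow> A (b(i:=v)) = A b)"

lemma cs_factor: "indep A lo m \<Longrightarrow> cs lo m (\<lambda>b. A b * F b) b0 = A b0 * cs lo m F b0"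
proof (induction m arbitrary: F b0)
  case 0 then show ?case by simp
next
  case (Suc m)
  have i: "indep A lo m" using Suc.prems unfolding indep_def by auto
  have "(\<lambda>b. A (b(lo+m:=True)) * F (b(lo+m:=True)) + A (b(lo+m:=False)) * F (b(lo+m:=False)))
     = (\<lambda>b. A b * (F (b(lo+m:=True)) + F (b(lo+m:=False))))"
    using Suc.prems unfolding indep_def by (auto simp: algebra_simps)
  then show ?case using Suc.IH[OF i] by simp
qed

lemma cs_split: "cs lo (a + c) F = cs lo a (cs (lo + a) c F)"
proof (induction c arbitrary: F)
  case 0 then show ?case by simp
next
  case (Suc c)
  then show ?case by (simp add: add.assoc)
qed

lemma cs_indep_out:
  "(\<forall>b v. F (b(i:=v)) = F b) \<Longrightarrow> \<not>(lo \<le> i \<and> i < lo + m) \<Longrightarrow> cs lo m F (b(i:=v)) = cs lo m F b"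
proof (induction m arbitrary: F b)
  case 0 then show ?case by simp
next
  case (Suc m)
  define F' where "F' = (\<lambda>b. F (b(lo+m:=True)) + F (b(lo+m:=False)))"
  have ne: "i \<noteq> lo + m" using Suc.prems by auto
  have "\<forall>b v. F' (b(i:=v)) = F' b"
  proof (intro allI)
    fix b v
    have a: "F (b(i:=v, lo+m:=w)) = F (b(lo+m:=w))" for w
      using Suc.prems(1) fun_upd_twist[OF ne, of b v w] by metis
    show "F' (b(i:=v)) = F' b" unfolding F'_def using a[of True] a[of False] by simp
  qed
  then have "cs lo m F' (b(i:=v)) = cs lo m F' b" by (rule Suc.IH) (use Suc.prems(2) in auto)
  then show ?case unfolding F'_def by (simp only: cs.simps)
qed

lemma cs_indep_in: "lo \<le> i \<Longrightarrow> i < lo + m \<Longrightarrow> cs lo m F (b(i:=v)) = cs lo m F b"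
proof (induction m arbitrary: F b)
  case 0 then show ?case by simp
next
  case (Suc m)
  show ?case
  proof (cases "i < lo + m")
    case True then show ?thesis using Suc by simp
  next
    case False
    then have ii: "i = lo + m" using Suc by simp
    define F' where "F' = (\<lambda>b. F (b(lo+m:=True)) + F (b(lo+m:=False)))"
    have p: "\<forall>b v. F' (b(i:=v)) = F' b" unfolding F'_def by (simp add: ii)
    have h: "cs lo m F' (b(i:=v)) = cs lo m F' b"
      by (rule cs_indep_out[OF p]) (simp add: ii)
    show ?thesis using h unfolding F'_def by (simp only: cs.simps)
  qed
qed

lemma indep_cs: "indep (cs lo m F) lo m"
  unfolding indep_def using cs_indep_in by blast

lemma chi_upd_in: "finite U \<Longrightarrow> j \<in> U \<Longrightarrow> chi U (b(j:=v)) = sg v * chi (U - {j}) b"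
proof -
  assume f: "finite U" "j \<in> U"
  have "(\<Prod>i\<in>U - {j}. sg ((b(j:=v)) i)) = (\<Prod>i\<in>U - {j}. sg (b i))" by (rule prod.cong) auto
  then show ?thesis unfolding chi_def using f by (simp add: prod.remove)
qed

lemma chi_upd_out: "j \<notin> U \<Longrightarrow> chi U (b(j:=v)) = chi U b"
  unfolding chi_def by (rule prod.cong) auto

lemma chi_sum_zero: "finite U \<Longrightarrow> j \<in> U \<Longrightarrow> chi U (b(j:=True)) + chi U (b(j:=False)) = 0"
  by (simp add: chi_upd_in sg_def)

lemma sg_sq: "sg v * sg v = 1" by (simp add: sg_def)

lemma chi_sq: "chi U b * chi U b = 1"
  unfolding chi_def by (simp add: prod.distrib[symmetric] sg_sq)

lemma chi_pm: "chi U b = 1 \<or> chi U b = -1"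
  using chi_sq[of U b] by (simp add: zmult_eq_1_iff)

lemma chi_mult: "finite S \<Longrightarrow> finite U \<Longrightarrow> chi S b * chi U b = chi ((S - U) \<union> (U - S)) b"
proof -
  assume f: "finite S" "finite U"
  have 1: "chi S b = chi (S - U) b * chi (S \<inter> U) b"
    unfolding chi_def using f by (subst prod.union_disjoint[symmetric]) (auto intro: prod.cong)
  have 2: "chi U b = chi (U - S) b * chi (S \<inter> U) b"
    unfolding chi_def using f by (subst prod.union_disjoint[symmetric]) (auto intro: prod.cong)
  have 3: "chi ((S - U) \<union> (U - S)) b = chi (S - U) b * chi (U - S) b"
    unfolding chi_def using f by (subst prod.union_disjoint) auto
  show ?thesis unfolding 1 2 3 using chi_sq[of "S \<inter> U" b] by (simp add: algebra_simps)
qed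

lemma cs_chi_dvd: "finite U \<Longrightarrow> 2^m dvd cs lo m (chi U) b0"
proof (induction m arbitrary: b0)
  case 0 then show ?case by simp
next
  case (Suc m)
  show ?case
  proof (cases "lo + m \<in> U")
    case True
    then have "(\<lambda>b. chi U (b(lo+m:=True)) + chi U (b(lo+m:=False))) = (\<lambda>b. 0)"
      using Suc.prems chi_sum_zero by auto
    then show ?thesis by (simp add: cs_zero)
  next
    case False
    then have "(\<lambda>b. chi U (b(lo+m:=True)) + chi U (b(lo+m:=False))) = (\<lambda>b. 2 * chi U b)"
      by (simp add: chi_upd_out)
    then show ?thesis using Suc by (simp add: cs_mult)
  qed
qed

lemma cs_chi_kill: "1 \<le> m \<Longrightarrow> cs lo m (chi {lo..<lo+m}) b0 = 0"
proof -
  assume "1 \<le> m"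
  then obtain m' where m: "m = Suc m'" by (cases m) auto
  have "(\<lambda>b. chi {lo..<lo+m} (b(lo+m':=True)) + chi {lo..<lo+m} (b(lo+m':=False))) = (\<lambda>b. 0)"
    using chi_sum_zero[of "{lo..<lo+m}" "lo+m'"] m by auto
  then show ?thesis using m by (simp add: cs_zero)
qed


lemma X_prod: "(\<Prod>i\<in>S. X b i) = chi S b" by (simp add: X_def chi_def)

lemma wf_finite: "pdt_wf n T \<Longrightarrow> True" by simp

lemma node_eq:
  assumes fS: "finite S" and fU: "finite U"
  shows "2 * (pdt_eval (Node S tm tp) (X b) * chi U b) =
     pdt_eval tm (X b) * chi U b + pdt_eval tp (X b) * chi U b
     + pdt_eval tp (X b) * chi ((S - U) \<union> (U - S)) b - pdt_eval tm (X b) * chi ((S - U) \<union> (U - S)) b"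
proof -
  have m: "chi ((S - U) \<union> (U - S)) b = chi S b * chi U b" using chi_mult[OF fS fU] by simp
  show ?thesis using chi_pm[of S b] unfolding m by (auto simp: X_prod algebra_simps)
qed

lemma pdt_dvd:
  "pdt_wf n T \<Longrightarrow> U \<subseteq> {..<n} \<Longrightarrow> 2^(n - pdt_depth T) dvd cs 0 n (\<lambda>b. pdt_eval T (X b) * chi U b) b0"
proof (induction T arbitrary: U b0)
  case (Leaf c)
  have fU: "finite U" using Leaf.prems finite_subset by blast
  have "cs 0 n (\<lambda>b. pdt_eval (Leaf c) (X b) * chi U b) b0 = c * cs 0 n (chi U) b0"
    using cs_mult[of 0 n c "chi U" b0] by simp
  then show ?case using cs_chi_dvd[OF fU, of n 0 b0] by simp
next
  case (Node S tm tp)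
  have S: "S \<subseteq> {..<n}" and wm: "pdt_wf n tm" and wp: "pdt_wf n tp" using Node.prems by auto
  have fS: "finite S" using S finite_subset by blast
  have fU: "finite U" using Node.prems finite_subset by blast
  define V where "V = (S - U) \<union> (U - S)"
  have V: "V \<subseteq> {..<n}" using S Node.prems unfolding V_def by auto
  define s where "s = (\<lambda>T W. cs 0 n (\<lambda>b. pdt_eval T (X b) * chi W b) b0)"
  have "2 * s (Node S tm tp) U = cs 0 n (\<lambda>b. 2 * (pdt_eval (Node S tm tp) (X b) * chi U b)) b0"
    unfolding s_def by (simp add: cs_mult)
  also have "\<dots> = cs 0 n (\<lambda>b. (pdt_eval tm (X b) * chi U b + pdt_eval tp (X b) * chi U b
     + pdt_eval tp (X b) * chi V b) - pdt_eval tm (X b) * chi V b) b0"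
    unfolding V_def using node_eq[OF fS fU] by simp
  also have "\<dots> = s tm U + s tp U + s tp V - s tm V"
    unfolding s_def by (simp add: cs_diff cs_add)
  finally have eq: "2 * s (Node S tm tp) U = s tm U + s tp U + s tp V - s tm V" .
  let ?d = "pdt_depth (Node S tm tp)"
  show ?case
  proof (cases "?d \<le> n")
    case False then show ?thesis by simp
  next
    case True
    have le1: "n - ?d + 1 \<le> n - pdt_depth tm" "n - ?d + 1 \<le> n - pdt_depth tp" using True by auto
    have d1: "(2::int)^(n - ?d + 1) dvd s tm W" if "W \<subseteq> {..<n}" for W
      using dvd_trans[OF le_imp_power_dvd[OF le1(1)] Node.IH(1)[OF wm that]] unfolding s_def by blast
    have d2: "(2::int)^(n - ?d + 1) dvd s tp W" if "W \<subseteq> {..<n}" for W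
      using dvd_trans[OF le_imp_power_dvd[OF le1(2)] Node.IH(2)[OF wp that]] unfolding s_def by blast
    have "(2::int)^(n - ?d + 1) dvd 2 * s (Node S tm tp) U"
      unfolding eq using d1[OF Node.prems(2)] d2[OF Node.prems(2)] d1[OF V] d2[OF V]
      by (intro dvd_add dvd_diff) auto
    then have "(2::int)^(n - ?d) * 2 dvd 2 * s (Node S tm tp) U" by simp
    then have "(2::int)^(n - ?d) dvd s (Node S tm tp) U"
      by (simp add: mult.commute)
    then show ?thesis unfolding s_def .
  qed
qed


definition G :: "nat \<Rightarrow> nat \<Rightarrow> (nat \<Rightarrow> bool) \<Rightarrow> int" where
  "G k off b = majk k (X b) off * chi {off..<off+3^k} b"

fun tk :: "nat \<Rightarrow> int" where
  "tk 0 = 2"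
| "tk (Suc k) = - ((tk k)^3) div 2"

lemma majk_local: "(\<forall>i. off \<le> i \<and> i < off + 3^k \<longrightarrow> x i = y i) \<Longrightarrow> majk k x off = majk k y off"
proof (induction k arbitrary: off)
  case 0 then show ?case by simp
next
  case (Suc k)
  have a: "majk k x off = majk k y off" by (rule Suc.IH) (use Suc.prems in auto)
  have b: "majk k x (off + 3^k) = majk k y (off + 3^k)" by (rule Suc.IH) (use Suc.prems in auto)
  have c: "majk k x (off + 2*3^k) = majk k y (off + 2*3^k)" by (rule Suc.IH) (use Suc.prems in auto)
  show ?case using a b c by simp
qed

lemma majk_pm: "majk k (X b) off = 1 \<or> majk k (X b) off = -1"
  by (cases k) (auto simp: X_def sg_def maj3_def)

lemma maj3_eq: "a \<in> {-1,1} \<Longrightarrow> b \<in> {-1,1} \<Longrightarrow> c \<in> {-1,1} \<Longrightarrow> 2 * maj3 a b c = a + b + c - a*b*c"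
  by (auto simp: maj3_def)

definition loc :: "((nat \<Rightarrow> bool) \<Rightarrow> int) \<Rightarrow> nat \<Rightarrow> nat \<Rightarrow> bool" where
  "loc F l m \<longleftrightarrow> (\<forall>b i v. (i < l \<or> l + m \<le> i) \<longrightarrow> F (b(i:=v)) = F b)"

lemma loc_indep: "loc F l m \<Longrightarrow> l + m \<le> lo \<or> lo + m' \<le> l \<Longrightarrow> indep F lo m'"
  unfolding loc_def indep_def by auto

lemma indep_mult: "indep F lo m \<Longrightarrow> indep H lo m \<Longrightarrow> indep (\<lambda>b. F b * H b) lo m"
  unfolding indep_def by auto

lemma loc_chi: "loc (chi {l..<l+m}) l m"
  unfolding loc_def using chi_upd_out by auto

lemma loc_G: "loc (G k l) l (3^k)"
  unfolding loc_def G_def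
proof (intro allI impI)
  fix b i v assume h: "i < l \<or> l + 3^k \<le> i"
  have "majk k (X (b(i:=v))) l = majk k (X b) l" by (rule majk_local) (use h in \<open>auto simp: X_def\<close>)
  moreover have "chi {l..<l+3^k} (b(i:=v)) = chi {l..<l+3^k} b" by (rule chi_upd_out) (use h in auto)
  ultimately show "majk k (X (b(i:=v))) l * chi {l..<l+3^k} (b(i:=v)) = majk k (X b) l * chi {l..<l+3^k} b"
    by simp
qed

lemma cs_zero_fun: "cs lo m (\<lambda>b. 0) = (\<lambda>b. 0)"
  by (rule ext) (rule cs_zero)

lemma chi_concat: "chi {a..<a+m+p} b = chi {a..<a+m} b * chi {a+m..<a+m+p} b"
  unfolding chi_def by (simp add: prod.atLeastLessThan_concat)

lemma G_main: "cs A (3^k) (G k A) b0 = tk k"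
proof (induction k arbitrary: A b0)
  case 0
  have "G 0 A = (\<lambda>b. 1)" by (auto simp: G_def X_def chi_def sg_def)
  then show ?case by simp
next
  case (Suc k)
  define n where "n = (3::nat)^k"
  have n1: "1 \<le> n" unfolding n_def by simp
  define t where "t = tk k"
  define P0 where "P0 = G k A"
  define P1 where "P1 = G k (A+n)"
  define P2 where "P2 = G k (A+2*n)"
  define c0 where "c0 = chi {A..<A+n}"
  define c1 where "c1 = chi {A+n..<A+n+n}"
  define c2 where "c2 = chi {A+2*n..<A+2*n+n}"
  have IH: "cs B n (G k B) b = t" for B b using Suc.IH unfolding n_def t_def .
  have lP0: "loc P0 A n" unfolding P0_def n_def by (rule loc_G)
  have lP1: "loc P1 (A+n) n" unfolding P1_def n_def by (rule loc_G)
  have lc0: "loc c0 A n" unfolding c0_def using loc_chi[of A n] .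
  have lc1: "loc c1 (A+n) n" unfolding c1_def using loc_chi[of "A+n" n] by (simp add: mult_2 add.assoc)
  have kc1: "cs (A+n) n c1 b = 0" for b unfolding c1_def using cs_chi_kill[OF n1, of "A+n" b] by (simp add: mult_2 add.assoc)
  have kc2: "cs (A+2*n) n c2 b = 0" for b unfolding c2_def using cs_chi_kill[OF n1, of "A+2*n" b] by simp
  have IH2: "cs (A+2*n) n P2 b = t" for b unfolding P2_def using IH .
  have IH0: "cs A n P0 b = t" for b unfolding P0_def using IH .
  have IH1: "cs (A+n) n P1 b = t" for b unfolding P1_def using IH .
  have in2: "indep F (A+2*n) n" if "loc F l n" "l = A \<or> l = A + n" for F l
    using loc_indep[OF that(1)] that(2) by auto
  have in1: "indep F (A+n) n" if "loc F A n" for F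
    using loc_indep[OF that] by auto
  have pw: "2 * G (Suc k) A b = P0 b * c1 b * c2 b + P1 b * c0 b * c2 b + (c0 b * c1 b) * P2 b
              - (P0 b * P1 b) * P2 b" for b
  proof -
    have ch: "chi {A..<A+3^(Suc k)} b = c0 b * c1 b * c2 b"
    proof -
      have e: "A + 3^(Suc k) = A + n + n + n" unfolding n_def by simp
      have x1: "chi {A..<A+n+n+n} b = chi {A..<A+n+n} b * chi {A+n+n..<A+n+n+n} b"
        using chi_concat[of A "n+n" n b] by (simp add: add.assoc)
      have x2: "chi {A..<A+n+n} b = chi {A..<A+n} b * chi {A+n..<A+n+n} b"
        using chi_concat[of A n n b] by simp
      show ?thesis unfolding e x1 x2 c0_def c1_def c2_def by (simp add: mult_2 add.assoc)
    qed
    have mk: "majk (Suc k) (X b) A = maj3 (majk k (X b) A) (majk k (X b) (A+n)) (majk k (X b) (A+2*n))"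
      unfolding n_def by simp
    have m2: "2 * majk (Suc k) (X b) A = majk k (X b) A + majk k (X b) (A+n) + majk k (X b) (A+2*n)
       - majk k (X b) A * majk k (X b) (A+n) * majk k (X b) (A+2*n)"
      unfolding mk by (rule maj3_eq) (use majk_pm in auto)
    have "2 * G (Suc k) A b = (2 * majk (Suc k) (X b) A) * (c0 b * c1 b * c2 b)"
      unfolding G_def ch by simp
    also have "\<dots> = P0 b * c1 b * c2 b + P1 b * c0 b * c2 b + (c0 b * c1 b) * P2 b - (P0 b * P1 b) * P2 b"
    proof -
      have Gn: "G k B b = majk k (X b) B * chi {B..<B+n} b" for B unfolding G_def n_def ..
      show ?thesis unfolding m2 P0_def P1_def P2_def Gn c0_def c1_def c2_def by (simp add: algebra_simps)
    qed
    finally show ?thesis .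
  qed
  have split: "cs A (3^(Suc k)) F = cs A n (cs (A+n) n (cs (A+2*n) n F))" for F
  proof -
    have "3^(Suc k) = n + (n + n)" unfolding n_def by simp
    then show ?thesis using cs_split[of A n "n+n" F] cs_split[of "A+n" n n] by (simp add: mult_2 add.assoc)
  qed
  have T1: "cs A (3^(Suc k)) (\<lambda>b. P0 b * c1 b * c2 b) b0 = 0"
  proof -
    have "cs (A+2*n) n (\<lambda>b. P0 b * c1 b * c2 b) = (\<lambda>b. 0)"
    proof
      fix b
      have "indep (\<lambda>b. P0 b * c1 b) (A+2*n) n" by (intro indep_mult in2[OF lP0] in2[OF lc1]) auto
      then show "cs (A+2*n) n (\<lambda>b. P0 b * c1 b * c2 b) b = 0"
        using cs_factor[of "\<lambda>b. P0 b * c1 b" "A+2*n" n c2 b] kc2 by simp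
    qed
    then show ?thesis unfolding split by (simp add: cs_zero_fun)
  qed
  have T2: "cs A (3^(Suc k)) (\<lambda>b. P1 b * c0 b * c2 b) b0 = 0"
  proof -
    have "cs (A+2*n) n (\<lambda>b. P1 b * c0 b * c2 b) = (\<lambda>b. 0)"
    proof
      fix b
      have "indep (\<lambda>b. P1 b * c0 b) (A+2*n) n" by (intro indep_mult in2[OF lP1] in2[OF lc0]) auto
      then show "cs (A+2*n) n (\<lambda>b. P1 b * c0 b * c2 b) b = 0"
        using cs_factor[of "\<lambda>b. P1 b * c0 b" "A+2*n" n c2 b] kc2 by simp
    qed
    then show ?thesis unfolding split by (simp add: cs_zero_fun)
  qed
  have T3: "cs A (3^(Suc k)) (\<lambda>b. (c0 b * c1 b) * P2 b) b0 = 0"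
  proof -
    have "cs (A+2*n) n (\<lambda>b. (c0 b * c1 b) * P2 b) = (\<lambda>b. c0 b * (t * c1 b))"
    proof
      fix b
      have "indep (\<lambda>b. c0 b * c1 b) (A+2*n) n" by (intro indep_mult in2[OF lc0] in2[OF lc1]) auto
      then show "cs (A+2*n) n (\<lambda>b. (c0 b * c1 b) * P2 b) b = c0 b * (t * c1 b)"
        using cs_factor[of "\<lambda>b. c0 b * c1 b" "A+2*n" n P2 b] IH2 by simp
    qed
    moreover have "cs (A+n) n (\<lambda>b. c0 b * (t * c1 b)) = (\<lambda>b. 0)"
    proof
      fix b
      show "cs (A+n) n (\<lambda>b. c0 b * (t * c1 b)) b = 0"
        using cs_factor[OF in1[OF lc0], of "\<lambda>b. t * c1 b" b] cs_mult[of "A+n" n t c1 b] kc1 by simp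
    qed
    ultimately show ?thesis unfolding split by (simp add: cs_zero_fun)
  qed
  have T4: "cs A (3^(Suc k)) (\<lambda>b. (P0 b * P1 b) * P2 b) b0 = t^3"
  proof -
    have "cs (A+2*n) n (\<lambda>b. (P0 b * P1 b) * P2 b) = (\<lambda>b. P0 b * (t * P1 b))"
    proof
      fix b
      have "indep (\<lambda>b. P0 b * P1 b) (A+2*n) n" by (intro indep_mult in2[OF lP0] in2[OF lP1]) auto
      then show "cs (A+2*n) n (\<lambda>b. (P0 b * P1 b) * P2 b) b = P0 b * (t * P1 b)"
        using cs_factor[of "\<lambda>b. P0 b * P1 b" "A+2*n" n P2 b] IH2 by simp
    qed
    moreover have "cs (A+n) n (\<lambda>b. P0 b * (t * P1 b)) = (\<lambda>b. (t * t) * P0 b)"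
    proof
      fix b
      show "cs (A+n) n (\<lambda>b. P0 b * (t * P1 b)) b = (t * t) * P0 b"
        using cs_factor[OF in1[OF lP0], of "\<lambda>b. t * P1 b" b] cs_mult[of "A+n" n t P1 b] IH1 by simp
    qed
    ultimately show ?thesis unfolding split using cs_mult[of A n "t*t" P0 b0] IH0
      by (simp add: power3_eq_cube)
  qed
  have "2 * cs A (3^(Suc k)) (G (Suc k) A) b0 = cs A (3^(Suc k)) (\<lambda>b. 2 * G (Suc k) A b) b0"
    by (simp add: cs_mult)
  also have "\<dots> = cs A (3^(Suc k)) (\<lambda>b. P0 b * c1 b * c2 b + P1 b * c0 b * c2 b + (c0 b * c1 b) * P2 b
              - (P0 b * P1 b) * P2 b) b0" by (simp only: pw)
  also have "\<dots> = - (t^3)" by (simp only: cs_diff cs_add T1 T2 T3 T4)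
  finally have "2 * cs A (3^(Suc k)) (G (Suc k) A) b0 = - (t^3)" .
  then show ?case unfolding t_def by simp
qed


fun ee :: "nat \<Rightarrow> nat" where
  "ee 0 = 1"
| "ee (Suc k) = 3 * ee k - 1"

lemma ee_ge: "1 \<le> ee k" by (induction k) auto

lemma ee2: "2 * ee k = 3^k + 1"
proof (induction k)
  case 0 then show ?case by simp
next
  case (Suc k) then show ?case using ee_ge[of k] by simp
qed

lemma tk_pow: "tk k = 2^(ee k) \<or> tk k = -(2^(ee k))"
proof (induction k)
  case 0 then show ?case by simp
next
  case (Suc k)
  define E where "E = ee k"
  have E1: "1 \<le> E" unfolding E_def by (rule ee_ge)
  have p: "(2::int)^(3*E) = 2 * 2^(3*E - 1)"
    using E1 by (metis Suc_pred' power_Suc less_le_trans mult_pos_pos zero_less_one le_less zero_less_numeral less_numeral_extra(1) nat_0_less_mult_iff one_le_numeral)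
  have es: "ee (Suc k) = 3*E - 1" unfolding E_def by simp
  from Suc.IH have "tk k ^ 3 = 2^(3*E) \<or> tk k ^ 3 = -(2^(3*E))"
    unfolding E_def[symmetric] by (auto simp: power_mult[symmetric] mult.commute)
  then show ?case unfolding es using p by auto
qed

lemma X_in: "X b \<in> pm_inputs n" unfolding pm_inputs_def X_def sg_def by auto

theorem theorem2:
  shows "\<exists>c::real. c > 0 \<and> (\<forall>k::nat. k \<ge> 1 \<longrightarrow>
           (\<forall>T. pdt_computes (3^k) T (MAJ k) \<longrightarrow> real (pdt_depth T) \<ge> c * (9 / 4) ^ k))"
proof (intro exI[of _ "1/3"] conjI allI impI)
  fix k :: nat and T
  assume k: "1 \<le> k" and c: "pdt_computes (3^k) T (MAJ k)"
  define N where "N = (3::nat)^k"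
  define d where "d = pdt_depth T"
  have wf: "pdt_wf N T" and ev: "\<forall>x\<in>pm_inputs N. pdt_eval T x = MAJ k x"
    using c unfolding pdt_computes_def N_def by auto
  have dv: "2^(N - d) dvd cs 0 N (\<lambda>b. pdt_eval T (X b) * chi {..<N} b) (\<lambda>_. False)"
    unfolding d_def by (rule pdt_dvd[OF wf]) auto
  have "(\<lambda>b. pdt_eval T (X b) * chi {..<N} b) = G k 0"
  proof
    fix b
    show "pdt_eval T (X b) * chi {..<N} b = G k 0 b"
      using ev X_in[of b N] unfolding G_def MAJ_def N_def by (simp add: lessThan_atLeast0)
  qed
  then have "(2::int)^(N - d) dvd tk k" using dv G_main[of 0 k "\<lambda>_. False"] unfolding N_def by simp
  then have "(2::int)^(N - d) dvd 2^(ee k)" using tk_pow[of k] by auto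
  then have "N - d \<le> ee k" by (simp add: dvd_power_iff)
  then have "N \<le> 2 * d + 1" using ee2[of k] unfolding N_def by linarith
  then have r1: "real N \<le> 2 * real d + 1" by linarith
  have N3: "3 \<le> N" unfolding N_def using k by (metis power_one_right power_increasing zero_less_numeral one_le_numeral)
  have "(9/4::real)^k \<le> 3^k" by (rule power_mono) auto
  also have "(3::real)^k = real N" unfolding N_def by simp
  finally have "(9/4::real)^k \<le> real N" .
  then show "1/3 * (9/4) ^ k \<le> real (pdt_depth T)"
    using r1 N3 unfolding d_def by linarith
qed simp

end
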